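(* Let $h\ge2$ be an integer and let $G_h$ be the directed graph with vertices $s,t,u_1,\dots,u_h,v_1,\dots,v_h$ and arcs: $(u_j,u_{j+1})$ and $(v_j,v_{j+1})$ for $1\le j\le h-1$, each of weight $1$; and $(s,u_1),(u_h,s),(t,v_1),(v_h,t)$, and $(u_{i+1},v_i),(v_{i+1},u_i)$ for $1\le i\le h-1$, each of weight $+\infty$. Then the optimum value of the LP relaxation of $st$-Bi-Cut on $G_h$ equals $2(h-1)/h$, and every optimal solution $\mathbf{x}$ satisfies $x(u_i,u_{i+1})+x(v_i,v_{i+1})=2/h$ for all $1\le i\le h-1$, and hence $x_e\le 2/h$ for every arc $e$. Consequently, for every positive integer $\ell$, taking $h>2\ell$ gives a two-terminal instance of $\textsc{Dir-MC}$ for which no optimal solution of $\textsc{Dir-MC-Rel}$ is $1/\ell$-integral.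
   Context: The LP relaxation for two terminals $s,t$: minimize $\sum_e w_ex_e$ subject to $\sum_{e\in p}x_e\ge1$ for every directed $s$–$t$ path and every directed $t$–$s$ path $p$, and $x_e\ge0$; arcs of weight $+\infty$ contribute $0$ to the objective if $x_e=0$ and $+\infty$ otherwise (so any finite-cost solution has $x_e=0$ on them). A solution is $1/\ell$-integral if every $x_e$ is an integer multiple of $1/\ell$. *)

theory Defs
  imports Complex_Main "HOL-Library.Extended_Real"
begin

definition dpath :: "('v \<times> 'v) set \<Rightarrow> 'v list \<Rightarrow> 'v \<Rightarrow> 'v \<Rightarrow> bool" where
  "dpath A p a b \<longleftrightarrow> p \<noteq> [] \<and> hd p = a \<and> last p = b \<and> distinct p \<and>
     (\<forall>i. Suc i < length p \<longrightarrow> (p ! i, p ! Suc i) \<in> A)"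

definition path_val :: "('v \<times> 'v \<Rightarrow> real) \<Rightarrow> 'v list \<Rightarrow> real" where
  "path_val x p = (\<Sum>i | Suc i < length p. x (p ! i, p ! Suc i))"

text \<open>Finite-cost feasible solutions: nonnegative, zero on arcs of weight +infinity,
  and every directed s-t and t-s path has x-length at least 1.\<close>
definition lp_feasible ::
  "('v \<times> 'v) set \<Rightarrow> ('v \<times> 'v \<Rightarrow> ereal) \<Rightarrow> 'v \<Rightarrow> 'v \<Rightarrow> ('v \<times> 'v \<Rightarrow> real) \<Rightarrow> bool" where
  "lp_feasible A w s t x \<longleftrightarrow>
     (\<forall>e\<in>A. 0 \<le> x e) \<and> (\<forall>e\<in>A. w e = \<infinity> \<longrightarrow> x e = 0) \<and>
     (\<forall>p. dpath A p s t \<or> dpath A p t s \<longrightarrow> 1 \<le> path_val x p)"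

text \<open>Objective; arcs of infinite weight contribute 0 since x vanishes on them.\<close>
definition lp_cost :: "('v \<times> 'v) set \<Rightarrow> ('v \<times> 'v \<Rightarrow> ereal) \<Rightarrow> ('v \<times> 'v \<Rightarrow> real) \<Rightarrow> real" where
  "lp_cost A w x = (\<Sum>e\<in>{e\<in>A. w e \<noteq> \<infinity>}. real_of_ereal (w e) * x e)"

definition lp_optimal ::
  "('v \<times> 'v) set \<Rightarrow> ('v \<times> 'v \<Rightarrow> ereal) \<Rightarrow> 'v \<Rightarrow> 'v \<Rightarrow> ('v \<times> 'v \<Rightarrow> real) \<Rightarrow> bool" where
  "lp_optimal A w s t x \<longleftrightarrow> lp_feasible A w s t x \<and>
     (\<forall>y. lp_feasible A w s t y \<longrightarrow> lp_cost A w x \<le> lp_cost A w y)"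

definition lp_opt_value ::
  "('v \<times> 'v) set \<Rightarrow> ('v \<times> 'v \<Rightarrow> ereal) \<Rightarrow> 'v \<Rightarrow> 'v \<Rightarrow> real \<Rightarrow> bool" where
  "lp_opt_value A w s t v \<longleftrightarrow>
     (\<exists>x. lp_feasible A w s t x \<and> lp_cost A w x = v) \<and>
     (\<forall>x. lp_feasible A w s t x \<longrightarrow> v \<le> lp_cost A w x)"

definition frac_integral :: "nat \<Rightarrow> ('v \<times> 'v) set \<Rightarrow> ('v \<times> 'v \<Rightarrow> real) \<Rightarrow> bool" where
  "frac_integral l A x \<longleftrightarrow> (\<forall>e\<in>A. \<exists>k::int. x e = real_of_int k / real l)"

datatype gv = S | T | U nat | V nat

definition unit_arcs :: "nat \<Rightarrow> (gv \<times> gv) set" where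
  "unit_arcs h = {(U j, U (Suc j)) | j. 1 \<le> j \<and> j \<le> h - 1}
              \<union> {(V j, V (Suc j)) | j. 1 \<le> j \<and> j \<le> h - 1}"

definition Gh_arcs :: "nat \<Rightarrow> (gv \<times> gv) set" where
  "Gh_arcs h = unit_arcs h \<union> {(S, U 1), (U h, S), (T, V 1), (V h, T)}
     \<union> {(U (Suc i), V i) | i. 1 \<le> i \<and> i \<le> h - 1}
     \<union> {(V (Suc i), U i) | i. 1 \<le> i \<and> i \<le> h - 1}"

definition Gh_w :: "nat \<Rightarrow> gv \<times> gv \<Rightarrow> ereal" where
  "Gh_w h e = (if e \<in> unit_arcs h then 1 else \<infinity>)"

end

theory Submission
  imports Defs
begin

fun pv :: "('v \<times> 'v \<Rightarrow> real) \<Rightarrow> 'v list \<Rightarrow> real" where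
  "pv x [] = 0"
| "pv x [a] = 0"
| "pv x (a # b # p) = x (a, b) + pv x (b # p)"

lemma path_val_pv: "path_val x p = pv x p"
proof (induction x p rule: pv.induct)
  case (3 x a b p)
  have "{i. Suc i < length (a # b # p)} = insert 0 (Suc ` {i. Suc i < length (b # p)})"
    by (auto simp: image_iff) (metis Suc_less_eq gr0_implies_Suc not_gr_zero)
  then have "path_val x (a # b # p) =
     x (a, b) + (\<Sum>i\<in>{i. Suc i < length (b # p)}. x ((a # b # p) ! Suc i, (a # b # p) ! Suc (Suc i)))"
    unfolding path_val_def by (simp add: sum.reindex)
  also have "\<dots> = x (a, b) + path_val x (b # p)"
    unfolding path_val_def by simp
  finally show ?case using 3 by simp
qed (auto simp: path_val_def)

lemma pv_Cons: "ys \<noteq> [] \<Longrightarrow> pv x (a # ys) = x (a, hd ys) + pv x ys"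
  by (cases ys) auto

lemma pv_append: "xs \<noteq> [] \<Longrightarrow> ys \<noteq> [] \<Longrightarrow> pv x (xs @ ys) = pv x xs + pv x ys + x (last xs, hd ys)"
proof (induction xs)
  case (Cons a xs)
  then show ?case by (cases xs) (auto simp: pv_Cons)
qed simp

lemma pv_upt: "m \<le> n \<Longrightarrow> pv x (map f [m..<Suc n]) = (\<Sum>j\<in>{m..<n}. x (f j, f (Suc j)))"
proof (induction n)
  case (Suc n)
  show ?case
  proof (cases "m = Suc n")
    case False
    then have "m \<le> n" using Suc by auto
    have "pv x (map f [m..<Suc (Suc n)]) = pv x (map f [m..<Suc n] @ [f (Suc n)])" by simp
    also have "\<dots> = pv x (map f [m..<Suc n]) + x (f n, f (Suc n))"
      using \<open>m \<le> n\<close> by (subst pv_append) (auto simp: last_map)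
    finally show ?thesis using Suc \<open>m \<le> n\<close> by simp
  qed simp
qed simp

lemma pv_potential:
  assumes "\<And>a b. (a, b) \<in> A \<Longrightarrow> phi b - phi a \<le> x (a, b)"
    and "successively (\<lambda>a b. (a, b) \<in> A) p" and "p \<noteq> []"
  shows "phi (last p) - phi (hd p) \<le> pv x p"
  using assms(2,3)
proof (induction p)
  case (Cons a p)
  show ?case
  proof (cases p)
    case (Cons b q)
    with Cons.prems Cons.IH have "phi (last p) - phi b \<le> pv x p" "(a, b) \<in> A" by auto
    with assms(1)[of a b] Cons show ?thesis by simp
  qed simp
qed simp


lemma successively_upt:
  assumes "\<And>j. m \<le> j \<Longrightarrow> Suc j < n \<Longrightarrow> P j (Suc j)"
  shows "successively P [m..<n]"
  unfolding successively_conv_nth using assms by auto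

lemma hd_map_upt_append: "m < n \<Longrightarrow> hd (map f [m..<n] @ L) = f m"
  by (simp add: upt_conv_Cons)

definition PP :: "nat \<Rightarrow> nat \<Rightarrow> gv list" where
  "PP h i = S # map U [1..<Suc (Suc i)] @ map V [i..<Suc h] @ [T]"
definition QQ :: "nat \<Rightarrow> nat \<Rightarrow> gv list" where
  "QQ h i = T # map V [1..<Suc (Suc i)] @ map U [i..<Suc h] @ [S]"

lemma dpath_PP:
  assumes "1 \<le> i" "i < h"
  shows "dpath (Gh_arcs h) (PP h i) S T"
proof -
  have "successively (\<lambda>a b. (a, b) \<in> Gh_arcs h) (PP h i)"
    unfolding PP_def using assms
    by (auto simp: hd_append hd_map successively_append_iff successively_Cons successively_map last_map hd_map
          Gh_arcs_def unit_arcs_def intro!: successively_upt)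
  moreover have "distinct (PP h i)"
    unfolding PP_def by (auto simp: distinct_map inj_on_def)
  ultimately show ?thesis unfolding dpath_def successively_conv_nth PP_def by simp
qed

lemma dpath_QQ:
  assumes "1 \<le> i" "i < h"
  shows "dpath (Gh_arcs h) (QQ h i) T S"
proof -
  have "successively (\<lambda>a b. (a, b) \<in> Gh_arcs h) (QQ h i)"
    unfolding QQ_def using assms
    by (auto simp: hd_append hd_map successively_append_iff successively_Cons successively_map last_map hd_map
          Gh_arcs_def unit_arcs_def intro!: successively_upt)
  moreover have "distinct (QQ h i)"
    unfolding QQ_def by (auto simp: distinct_map inj_on_def)
  ultimately show ?thesis unfolding dpath_def successively_conv_nth QQ_def by simp
qed

lemma pv_PP:
  assumes "1 \<le> i" "i < h"
  shows "pv x (PP h i) = x (S, U 1) + (\<Sum>j\<in>{1..<Suc i}. x (U j, U (Suc j)))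
     + x (U (Suc i), V i) + (\<Sum>j\<in>{i..<h}. x (V j, V (Suc j))) + x (V h, T)"
proof -
  have h1: "hd (map U [1..<Suc (Suc i)] @ L) = U 1" for L
    by (rule hd_map_upt_append) simp
  show ?thesis
  unfolding PP_def using assms
  by (simp add: pv_Cons pv_append pv_upt last_map h1 hd_map del: upt_Suc)
qed

lemma pv_QQ:
  assumes "1 \<le> i" "i < h"
  shows "pv x (QQ h i) = x (T, V 1) + (\<Sum>j\<in>{1..<Suc i}. x (V j, V (Suc j)))
     + x (V (Suc i), U i) + (\<Sum>j\<in>{i..<h}. x (U j, U (Suc j))) + x (U h, S)"
proof -
  have h1: "hd (map V [1..<Suc (Suc i)] @ L) = V 1" for L
    by (rule hd_map_upt_append) simp
  show ?thesis
  unfolding QQ_def using assms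
  by (simp add: pv_Cons pv_append pv_upt last_map h1 hd_map del: upt_Suc)
qed


lemma unit_arcs_alt: "unit_arcs h = (\<lambda>j. (U j, U (Suc j))) ` {1..<h} \<union> (\<lambda>j. (V j, V (Suc j))) ` {1..<h}"
  unfolding unit_arcs_def by auto

lemma unit_sub: "unit_arcs h \<subseteq> Gh_arcs h"
  unfolding Gh_arcs_def by auto

lemma cost_eq: "lp_cost (Gh_arcs h) (Gh_w h) x =
   (\<Sum>j\<in>{1..<h}. x (U j, U (Suc j))) + (\<Sum>j\<in>{1..<h}. x (V j, V (Suc j)))"
proof -
  have "{e\<in>Gh_arcs h. Gh_w h e \<noteq> \<infinity>} = unit_arcs h"
    using unit_sub by (auto simp: Gh_w_def)
  then have "lp_cost (Gh_arcs h) (Gh_w h) x = (\<Sum>e\<in>unit_arcs h. x e)"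
    unfolding lp_cost_def by (auto simp: Gh_w_def intro!: sum.cong)
  also have "\<dots> = (\<Sum>e\<in>(\<lambda>j. (U j, U (Suc j))) ` {1..<h}. x e) + (\<Sum>e\<in>(\<lambda>j. (V j, V (Suc j))) ` {1..<h}. x e)"
    unfolding unit_arcs_alt by (rule sum.union_disjoint) auto
  also have "\<dots> = (\<Sum>j\<in>{1..<h}. x (U j, U (Suc j))) + (\<Sum>j\<in>{1..<h}. x (V j, V (Suc j)))"
    by (subst (1 2) sum.reindex) (auto simp: inj_on_def)
  finally show ?thesis .
qed

lemma inf_arcs:
  assumes "lp_feasible (Gh_arcs h) (Gh_w h) S T x"
  shows "x (S, U 1) = 0" "x (U h, S) = 0" "x (T, V 1) = 0" "x (V h, T) = 0"
    "1 \<le> i \<Longrightarrow> i < h \<Longrightarrow> x (U (Suc i), V i) = 0"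
    "1 \<le> i \<Longrightarrow> i < h \<Longrightarrow> x (V (Suc i), U i) = 0"
  using assms unfolding lp_feasible_def
  by (auto simp: Gh_arcs_def Gh_w_def unit_arcs_def)

lemma split_sum:
  fixes f :: "nat \<Rightarrow> real"
  assumes "1 \<le> i" "i < h"
  shows "(\<Sum>j\<in>{1..<Suc i}. f j) + (\<Sum>j\<in>{i..<h}. f j) = (\<Sum>j\<in>{1..<h}. f j) + f i"
proof -
  have "(\<Sum>j\<in>{1..<Suc i}. f j) = (\<Sum>j\<in>{1..<i}. f j) + f i"
    using assms by (simp add: sum.atLeastLessThan_Suc)
  moreover have "(\<Sum>j\<in>{1..<i}. f j) + (\<Sum>j\<in>{i..<h}. f j) = (\<Sum>j\<in>{1..<h}. f j)"
    using assms by (simp add: sum.atLeastLessThan_concat)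
  ultimately show ?thesis by simp
qed

lemma key:
  assumes F: "lp_feasible (Gh_arcs h) (Gh_w h) S T x" and i: "1 \<le> i" "i < h"
  shows "2 \<le> lp_cost (Gh_arcs h) (Gh_w h) x + x (U i, U (Suc i)) + x (V i, V (Suc i))"
proof -
  have p: "1 \<le> path_val x (PP h i)" "1 \<le> path_val x (QQ h i)"
    using F dpath_PP[OF i] dpath_QQ[OF i] unfolding lp_feasible_def by auto
  have "1 \<le> (\<Sum>j\<in>{1..<Suc i}. x (U j, U (Suc j))) + (\<Sum>j\<in>{i..<h}. x (V j, V (Suc j)))"
    using p(1) pv_PP[OF i, of x] inf_arcs[OF F] i by (simp add: path_val_pv)
  moreover have "1 \<le> (\<Sum>j\<in>{1..<Suc i}. x (V j, V (Suc j))) + (\<Sum>j\<in>{i..<h}. x (U j, U (Suc j)))"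
    using p(2) pv_QQ[OF i, of x] inf_arcs[OF F] i by (simp add: path_val_pv)
  ultimately show ?thesis
    using split_sum[OF i, of "\<lambda>j. x (U j, U (Suc j))"] split_sum[OF i, of "\<lambda>j. x (V j, V (Suc j))"]
    unfolding cost_eq by linarith
qed


lemma lower:
  assumes F: "lp_feasible (Gh_arcs h) (Gh_w h) S T x" and h: "2 \<le> h"
  shows "2 * (real h - 1) / real h \<le> lp_cost (Gh_arcs h) (Gh_w h) x"
proof -
  let ?c = "lp_cost (Gh_arcs h) (Gh_w h) x"
  have "(\<Sum>i\<in>{1..<h}. (2::real)) \<le> (\<Sum>i\<in>{1..<h}. ?c + x (U i, U (Suc i)) + x (V i, V (Suc i)))"
    by (rule sum_mono) (use key[OF F] in auto)
  also have "\<dots> = real (h - 1) * ?c + ?c"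
    by (simp add: sum.distrib cost_eq)
  finally have "2 * real (h - 1) \<le> real h * ?c"
    using h by (simp add: of_nat_diff algebra_simps)
  then show ?thesis using h by (simp add: of_nat_diff pos_divide_le_eq mult.commute)
qed

definition x0 :: "nat \<Rightarrow> gv \<times> gv \<Rightarrow> real" where
  "x0 h e = (if e \<in> unit_arcs h then 1 / real h else 0)"

lemma x0_cost: "2 \<le> h \<Longrightarrow> lp_cost (Gh_arcs h) (Gh_w h) (x0 h) = 2 * (real h - 1) / real h"
proof -
  assume h: "2 \<le> h"
  have a: "(\<Sum>j\<in>{1..<h}. x0 h (U j, U (Suc j))) = (\<Sum>j\<in>{1..<h}. 1 / real h)"
    by (rule sum.cong) (auto simp: x0_def unit_arcs_def)
  have b: "(\<Sum>j\<in>{1..<h}. x0 h (V j, V (Suc j))) = (\<Sum>j\<in>{1..<h}. 1 / real h)"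
    by (rule sum.cong) (auto simp: x0_def unit_arcs_def)
  show ?thesis unfolding cost_eq a b using h by (simp add: of_nat_diff field_simps)
qed

lemma x0_feasible:
  assumes h: "2 \<le> h"
  shows "lp_feasible (Gh_arcs h) (Gh_w h) S T (x0 h)"
proof -
  define phi where "phi v = (case v of S \<Rightarrow> 0 | T \<Rightarrow> 1 | U j \<Rightarrow> (real j - 1) / real h
      | V j \<Rightarrow> real j / real h)" for v
  define psi where "psi v = (case v of S \<Rightarrow> 1 | T \<Rightarrow> 0 | U j \<Rightarrow> real j / real h
      | V j \<Rightarrow> (real j - 1) / real h)" for v
  have hp: "real h > 0" using h by simp
  have P: "phi b - phi a \<le> x0 h (a, b)" if "(a, b) \<in> Gh_arcs h" for a b
    using that hp h unfolding Gh_arcs_def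
    by (auto simp: phi_def x0_def unit_arcs_def divide_simps)
  have Q: "psi b - psi a \<le> x0 h (a, b)" if "(a, b) \<in> Gh_arcs h" for a b
    using that hp h unfolding Gh_arcs_def
    by (auto simp: psi_def x0_def unit_arcs_def divide_simps)
  have "1 \<le> path_val (x0 h) p" if "dpath (Gh_arcs h) p S T \<or> dpath (Gh_arcs h) p T S" for p
  proof -
    from that show ?thesis
    proof
      assume d: "dpath (Gh_arcs h) p S T"
      then have "phi (last p) - phi (hd p) \<le> pv (x0 h) p"
        by (intro pv_potential[where A="Gh_arcs h" and phi=phi and x="x0 h", OF P]) (auto simp: dpath_def successively_conv_nth)
      then show ?thesis using d by (simp add: dpath_def phi_def path_val_pv)
    next
      assume d: "dpath (Gh_arcs h) p T S"
      then have "psi (last p) - psi (hd p) \<le> pv (x0 h) p"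
        by (intro pv_potential[where A="Gh_arcs h" and phi=psi and x="x0 h", OF Q]) (auto simp: dpath_def successively_conv_nth)
      then show ?thesis using d by (simp add: dpath_def psi_def path_val_pv)
    qed
  qed
  moreover have "\<forall>e\<in>Gh_arcs h. 0 \<le> x0 h e" by (simp add: x0_def)
  moreover have "\<forall>e\<in>Gh_arcs h. Gh_w h e = \<infinity> \<longrightarrow> x0 h e = 0"
    by (simp add: x0_def Gh_w_def)
  ultimately show ?thesis unfolding lp_feasible_def by blast
qed


lemma opt_eq:
  assumes O: "lp_optimal (Gh_arcs h) (Gh_w h) S T x" and h: "2 \<le> h"
  shows "\<forall>i. 1 \<le> i \<and> i \<le> h - 1 \<longrightarrow> x (U i, U (Suc i)) + x (V i, V (Suc i)) = 2 / real h"
proof -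
  have F: "lp_feasible (Gh_arcs h) (Gh_w h) S T x" using O by (simp add: lp_optimal_def)
  let ?c = "lp_cost (Gh_arcs h) (Gh_w h) x"
  let ?g = "\<lambda>i. x (U i, U (Suc i)) + x (V i, V (Suc i)) - 2 / real h"
  have hp: "real h > 0" using h by simp
  have cle: "?c \<le> 2 * (real h - 1) / real h"
    using O x0_feasible[OF h] x0_cost[OF h] unfolding lp_optimal_def by metis
  have "2 - 2 * (real h - 1) / real h = 2 / real h" using hp by (simp add: field_simps)
  then have g0: "0 \<le> ?g i" if "1 \<le> i" "i < h" for i
    using key[OF F that] cle by linarith
  have "(\<Sum>i\<in>{1..<h}. ?g i) = ?c - real (h - 1) * (2 / real h)"
    by (simp add: sum_subtractf sum.distrib cost_eq)
  also have "\<dots> \<le> 0" using cle h hp by (simp add: of_nat_diff field_simps)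
  finally have "(\<Sum>i\<in>{1..<h}. ?g i) = 0"
    using sum_nonneg[of "{1..<h}" ?g] g0 by fastforce
  then have "\<forall>i\<in>{1..<h}. ?g i = 0"
    by (subst (asm) sum_nonneg_eq_0_iff) (use g0 in auto)
  then show ?thesis by auto
qed

theorem mainTheorem12:
  fixes h :: nat
  assumes "2 \<le> h"
  shows "lp_opt_value (Gh_arcs h) (Gh_w h) S T (2 * (real h - 1) / real h)
    \<and> (\<forall>x. lp_optimal (Gh_arcs h) (Gh_w h) S T x \<longrightarrow>
          (\<forall>i. 1 \<le> i \<and> i \<le> h - 1 \<longrightarrow>
             x (U i, U (Suc i)) + x (V i, V (Suc i)) = 2 / real h)
        \<and> (\<forall>e\<in>Gh_arcs h. x e \<le> 2 / real h))
    \<and> (\<forall>l::nat. 0 < l \<and> 2 * l < h \<longrightarrow>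
          \<not> (\<exists>x. lp_optimal (Gh_arcs h) (Gh_w h) S T x \<and> frac_integral l (Gh_arcs h) x))"
proof (intro conjI)
  show "lp_opt_value (Gh_arcs h) (Gh_w h) S T (2 * (real h - 1) / real h)"
    unfolding lp_opt_value_def using x0_feasible[OF assms] x0_cost[OF assms] lower[OF _ assms] by blast
next
  show "\<forall>x. lp_optimal (Gh_arcs h) (Gh_w h) S T x \<longrightarrow>
          (\<forall>i. 1 \<le> i \<and> i \<le> h - 1 \<longrightarrow>
             x (U i, U (Suc i)) + x (V i, V (Suc i)) = 2 / real h)
        \<and> (\<forall>e\<in>Gh_arcs h. x e \<le> 2 / real h)"
  proof (rule allI, rule impI, rule conjI)
  fix x assume O: "lp_optimal (Gh_arcs h) (Gh_w h) S T x"
  then show "\<forall>i. 1 \<le> i \<and> i \<le> h - 1 \<longrightarrow> x (U i, U (Suc i)) + x (V i, V (Suc i)) = 2 / real h"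
    using opt_eq assms by blast
  have F: "lp_feasible (Gh_arcs h) (Gh_w h) S T x" using O by (simp add: lp_optimal_def)
  have E: "\<And>i. 1 \<le> i \<Longrightarrow> i \<le> h - 1 \<Longrightarrow> x (U i, U (Suc i)) + x (V i, V (Suc i)) = 2 / real h"
    using opt_eq[OF O assms] by blast
  have nn: "\<And>e. e \<in> Gh_arcs h \<Longrightarrow> 0 \<le> x e" using F by (simp add: lp_feasible_def)
  have z: "\<And>e. e \<in> Gh_arcs h \<Longrightarrow> e \<notin> unit_arcs h \<Longrightarrow> x e = 0"
    using F by (simp add: lp_feasible_def Gh_w_def)
  have hp: "0 < 2 / real h" using assms by simp
  show "\<forall>e\<in>Gh_arcs h. x e \<le> 2 / real h"
  proof
    fix e assume e: "e \<in> Gh_arcs h"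
    show "x e \<le> 2 / real h"
    proof (cases "e \<in> unit_arcs h")
      case True
      then obtain j where j: "1 \<le> j" "j \<le> h - 1"
        and "e = (U j, U (Suc j)) \<or> e = (V j, V (Suc j))" unfolding unit_arcs_def by auto
      moreover have "(U j, U (Suc j)) \<in> Gh_arcs h" "(V j, V (Suc j)) \<in> Gh_arcs h"
        using j unfolding Gh_arcs_def unit_arcs_def by auto
      ultimately show ?thesis using E[OF j] nn by fastforce
    next
      case False then show ?thesis using z[OF e] hp by simp
    qed
  qed
  qed
next
  show "\<forall>l::nat. 0 < l \<and> 2 * l < h \<longrightarrow>
          \<not> (\<exists>x. lp_optimal (Gh_arcs h) (Gh_w h) S T x \<and> frac_integral l (Gh_arcs h) x)"
  proof (intro allI impI)
  fix l :: nat assume l: "0 < l \<and> 2 * l < h"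
  show "\<not> (\<exists>x. lp_optimal (Gh_arcs h) (Gh_w h) S T x \<and> frac_integral l (Gh_arcs h) x)"
  proof
    assume "\<exists>x. lp_optimal (Gh_arcs h) (Gh_w h) S T x \<and> frac_integral l (Gh_arcs h) x"
    then obtain x where O: "lp_optimal (Gh_arcs h) (Gh_w h) S T x"
      and I: "frac_integral l (Gh_arcs h) x" by blast
    have E: "x (U 1, U (Suc 1)) + x (V 1, V (Suc 1)) = 2 / real h"
      using opt_eq[OF O assms] assms by auto
    have "(U 1, U (Suc 1)) \<in> Gh_arcs h" "(V 1, V (Suc 1)) \<in> Gh_arcs h"
      using assms unfolding Gh_arcs_def unit_arcs_def by auto
    then obtain k1 k2 :: int where k: "x (U 1, U (Suc 1)) = k1 / real l" "x (V 1, V (Suc 1)) = k2 / real l"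
      using I unfolding frac_integral_def by blast
    have lp: "real l > 0" "real h > 0" using l by auto
    have "real_of_int (k1 + k2) / real l = 2 / real h" using E k by (simp add: add_divide_distrib)
    then have "real_of_int (k1 + k2) * real h = 2 * real l" using lp by (simp add: field_simps)
    then have eq: "(k1 + k2) * int h = 2 * int l"
      by (metis of_int_eq_iff of_int_mult of_int_of_nat_eq of_int_numeral)
    have "k1 + k2 > 0"
    proof (rule ccontr)
      assume "\<not> k1 + k2 > 0"
      then have "(k1 + k2) * int h \<le> 0" by (simp add: mult_nonpos_nonneg)
      with eq l show False by simp
    qed
    then have "1 * int h \<le> (k1 + k2) * int h" by (intro mult_right_mono) auto
    with eq l show False by simp
  qed
  qed
qed

end
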